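(* Let $\tau\in\mathbb{H}$ (the upper half-plane) and let $\Lambda=\langle 1,\tau\rangle_\mathbb{Z}$. (1) The lattice $\Lambda$ is isogenous to $\overline{\Lambda}$ if and only if $\tau$ belongs to a hyperbolic geodesic in $\mathbb{H}$ with both endpoints in $\mathbb{P}^1(\mathbb{Q})$, or with endpoints that are conjugate real quadratic irrationals. (2) There exists a non-zero element of $\mathrm{Isog}(\Lambda,\overline{\Lambda})$ with rational absolute value if and only if $\tau$ belongs to a hyperbolic geodesic in $\mathbb{H}$ with both endpoints in $\mathbb{P}^1(\mathbb{Q})$.
   Context: Geodesics in $\mathbb{H}$ are vertical half-lines and semicircles centered on the real axis; their endpoints lie in $\mathbb{P}^1(\mathbb{R})=\mathbb{R}\cup\{\infty\}$. $\langle 1,\tau\rangle_\mathbb{Z}$ is the $\mathbb{Z}$-module generated by $1,\tau$, and $\overline{\Lambda}$ the complex conjugate lattice. For lattices $\Lambda_1,\Lambda_2$, $\mathrm{Isog}(\Lambda_1,\Lambda_2)=\{\alpha\in\mathbb{C}:\alpha\Lambda_1\subset\Lambda_2\}$, and $\Lambda_1$ is isogenous to $\Lambda_2$ if this group is non-zero. *)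

theory Defs
  imports Complex_Main
begin

definition lattice_gen :: "complex \<Rightarrow> complex set" where
  "lattice_gen \<tau> = {of_int m + of_int n * \<tau> | m n :: int. True}"

definition conj_lattice :: "complex set \<Rightarrow> complex set" where
  "conj_lattice L = cnj ` L"

definition Isog :: "complex set \<Rightarrow> complex set \<Rightarrow> complex set" where
  "Isog L1 L2 = {\<alpha>. (\<lambda>z. \<alpha> * z) ` L1 \<subseteq> L2}"

definition isogenous :: "complex set \<Rightarrow> complex set \<Rightarrow> bool" where
  "isogenous L1 L2 \<longleftrightarrow> Isog L1 L2 \<noteq> {0}"

datatype P1R = Fin real | Infty

definition P1Q :: "P1R set" where
  "P1Q = {Infty} \<union> {Fin r | r. r \<in> \<rat>}"

fun geodesic :: "P1R \<Rightarrow> P1R \<Rightarrow> complex set" where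
  "geodesic (Fin a) (Fin b) =
     {z. Im z > 0 \<and> cmod (z - complex_of_real ((a + b) / 2)) = \<bar>b - a\<bar> / 2}"
| "geodesic (Fin a) Infty = {z. Im z > 0 \<and> Re z = a}"
| "geodesic Infty (Fin b) = {z. Im z > 0 \<and> Re z = b}"
| "geodesic Infty Infty = {}"

definition conj_real_quad_irr :: "real \<Rightarrow> real \<Rightarrow> bool" where
  "conj_real_quad_irr a b \<longleftrightarrow> a \<notin> \<rat> \<and> a \<noteq> b \<and>
     (\<exists>r s. r \<in> \<rat> \<and> s \<in> \<rat> \<and> a\<^sup>2 + r * a + s = 0 \<and> b\<^sup>2 + r * b + s = 0)"

definition on_rational_geodesic :: "complex \<Rightarrow> bool" where
  "on_rational_geodesic \<tau> \<longleftrightarrow>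
     (\<exists>p q. p \<in> P1Q \<and> q \<in> P1Q \<and> p \<noteq> q \<and> \<tau> \<in> geodesic p q)"

definition on_quadratic_geodesic :: "complex \<Rightarrow> bool" where
  "on_quadratic_geodesic \<tau> \<longleftrightarrow>
     (\<exists>a b. conj_real_quad_irr a b \<and> \<tau> \<in> geodesic (Fin a) (Fin b))"

end

theory Submission
  imports Defs
begin

definition Rel :: "complex \<Rightarrow> int \<Rightarrow> int \<Rightarrow> int \<Rightarrow> bool" where
  "Rel t a b c \<longleftrightarrow> real_of_int b * ((Re t)\<^sup>2 + (Im t)\<^sup>2) + 2 * of_int a * Re t = of_int c"

lemma isog_char:
  assumes y: "Im t > 0"
  shows "\<alpha> \<in> Isog (lattice_gen t) (conj_lattice (lattice_gen t)) \<longleftrightarrow>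
     (\<exists>a b c. \<alpha> = of_int a + of_int b * cnj t \<and> Rel t a b c)"
proof
  assume A: "\<alpha> \<in> Isog (lattice_gen t) (conj_lattice (lattice_gen t))"
  have "1 \<in> lattice_gen t" unfolding lattice_gen_def
    by (rule CollectI, rule exI[of _ 1], rule exI[of _ 0]) simp
  hence "\<alpha> * 1 \<in> cnj ` lattice_gen t" using A unfolding Isog_def conj_lattice_def by blast
  then obtain m n where mn: "\<alpha> = cnj (of_int m + of_int n * t)"
    unfolding lattice_gen_def by auto
  have "t \<in> lattice_gen t" unfolding lattice_gen_def
    by (rule CollectI, rule exI[of _ 0], rule exI[of _ 1]) simp
  hence "\<alpha> * t \<in> cnj ` lattice_gen t" using A unfolding Isog_def conj_lattice_def by blast
  then obtain m' n' where mn': "\<alpha> * t = cnj (of_int m' + of_int n' * t)"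
    unfolding lattice_gen_def by auto
  have e1: "Im (\<alpha> * t) = Im (cnj (of_int m' + of_int n' * t))"
       and e2: "Re (\<alpha> * t) = Re (cnj (of_int m' + of_int n' * t))" using mn' by auto
  from e1 have "of_int m * Im t = - of_int n' * Im t" unfolding mn by (simp add: algebra_simps)
  hence "(of_int m + of_int n') * Im t = 0" by (simp add: algebra_simps)
  hence "real_of_int n' = - of_int m" using y by simp
  with e2 have "Rel t m n m'" unfolding mn Rel_def by (simp add: algebra_simps power2_eq_square)
  moreover have "\<alpha> = of_int m + of_int n * cnj t" using mn by simp
  ultimately show "\<exists>a b c. \<alpha> = of_int a + of_int b * cnj t \<and> Rel t a b c" by blast
next
  assume "\<exists>a b c. \<alpha> = of_int a + of_int b * cnj t \<and> Rel t a b c"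
  then obtain a b c where al: "\<alpha> = of_int a + of_int b * cnj t" and R: "Rel t a b c" by blast
  have hc: "real_of_int c = of_int b * ((Re t)\<^sup>2 + (Im t)\<^sup>2) + 2 * of_int a * Re t"
    using R unfolding Rel_def by simp
  show "\<alpha> \<in> Isog (lattice_gen t) (conj_lattice (lattice_gen t))"
    unfolding Isog_def conj_lattice_def
  proof (intro CollectI subsetI)
    fix w assume "w \<in> (\<lambda>z. \<alpha> * z) ` lattice_gen t"
    then obtain m n where w: "w = \<alpha> * (of_int m + of_int n * t)" unfolding lattice_gen_def by auto
    have "w = cnj (of_int (a*m + n*c) + of_int (b*m - a*n) * t)"
      unfolding w al by (simp add: complex_eq_iff algebra_simps power2_eq_square hc)
    moreover have "of_int (a*m + n*c) + of_int (b*m - a*n) * t \<in> lattice_gen t"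
      unfolding lattice_gen_def by blast
    ultimately show "w \<in> cnj ` lattice_gen t" by blast
  qed
qed

lemma alpha_props:
  assumes y: "Im t > 0" and R: "Rel t a b c"
  shows "(cmod (of_int a + of_int b * cnj t))\<^sup>2 = of_int (a\<^sup>2 + b * c)"
    and "(of_int a + of_int b * cnj t = 0) \<longleftrightarrow> a = 0 \<and> b = 0"
proof -
  have hc: "real_of_int c = of_int b * ((Re t)\<^sup>2 + (Im t)\<^sup>2) + 2 * of_int a * Re t"
    using R unfolding Rel_def by simp
  show "(cmod (of_int a + of_int b * cnj t))\<^sup>2 = of_int (a\<^sup>2 + b * c)"
    unfolding cmod_power2 by (simp add: hc algebra_simps power2_eq_square)
  show "(of_int a + of_int b * cnj t = 0) \<longleftrightarrow> a = 0 \<and> b = 0"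
    using y by (auto simp: complex_eq_iff)
qed

lemma geo_ff:
  "t \<in> geodesic (Fin r) (Fin s) \<longleftrightarrow> Im t > 0 \<and> (Re t)\<^sup>2 + (Im t)\<^sup>2 - (r + s) * Re t + r * s = 0"
proof -
  have "cmod (t - complex_of_real ((r + s) / 2)) = \<bar>s - r\<bar> / 2 \<longleftrightarrow>
        (cmod (t - complex_of_real ((r + s) / 2)))\<^sup>2 = (\<bar>s - r\<bar> / 2)\<^sup>2"
    by (rule power2_eq_iff_nonneg[symmetric]) auto
  also have "\<dots> \<longleftrightarrow> (Re t)\<^sup>2 + (Im t)\<^sup>2 - (r + s) * Re t + r * s = 0"
    unfolding cmod_power2 by (simp add: power2_eq_square algebra_simps) (auto simp: field_simps)
  finally show ?thesis by auto
qed

lemma clear_den: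
  assumes "u \<in> \<rat>" "v \<in> \<rat>" and e: "(Re t)\<^sup>2 + (Im t)\<^sup>2 - u * Re t + v = 0"
  shows "\<exists>m::int. m > 0 \<and> (\<exists>a b c. Rel t a b c \<and> b = 2 * m \<and> of_int a = - of_int m * u
            \<and> of_int c = - 2 * of_int m * v)"
proof -
  obtain p1 q1 where q1: "q1 > 0" and u: "u = of_int p1 / of_int q1" using Rats_cases'[OF assms(1)] by metis
  obtain p2 q2 where q2: "q2 > 0" and v: "v = of_int p2 / of_int q2" using Rats_cases'[OF assms(2)] by metis
  define m where "m = q1 * q2"
  have m: "m > 0" using q1 q2 by (simp add: m_def)
  have A: "real_of_int (- p1 * q2) = - of_int m * u" using q1 by (simp add: u m_def field_simps)
  have C: "real_of_int (- 2 * p2 * q1) = - 2 * of_int m * v" using q2 by (simp add: v m_def field_simps)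
  have "Rel t (- p1 * q2) (2 * m) (- 2 * p2 * q1)"
    unfolding Rel_def
  proof -
    have "real_of_int (2 * m) * ((Re t)\<^sup>2 + (Im t)\<^sup>2) + 2 * real_of_int (- p1 * q2) * Re t
        = 2 * of_int m * ((Re t)\<^sup>2 + (Im t)\<^sup>2 - u * Re t)" by (subst A) (simp add: algebra_simps)
    also have "\<dots> = - 2 * of_int m * v"
    proof -
      have "(Re t)\<^sup>2 + (Im t)\<^sup>2 - u * Re t = - v" using e by linarith
      then show ?thesis by simp
    qed
    finally show "real_of_int (2 * m) * ((Re t)\<^sup>2 + (Im t)\<^sup>2) + 2 * real_of_int (- p1 * q2) * Re t
        = real_of_int (- 2 * p2 * q1)" using C by simp
  qed
  with m A C show ?thesis by blast
qed

lemma vert_case: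
  assumes "Re t \<in> \<rat>"
  shows "\<exists>a b c. Rel t a b c \<and> (a \<noteq> 0 \<or> b \<noteq> 0) \<and> sqrt (of_int (a\<^sup>2 + b * c)) \<in> \<rat>"
proof -
  obtain p q where q: "q > 0" and r: "Re t = of_int p / of_int q" using Rats_cases'[OF assms] by metis
  have "Rel t q 0 (2 * p)" unfolding Rel_def using q by (simp add: r)
  moreover have "sqrt (of_int (q\<^sup>2 + 0 * (2*p))) = of_int q" using q by simp
  ultimately show ?thesis using q by (metis Rats_of_int less_irrefl)
qed

lemma circ_case:
  assumes "r \<in> \<rat>" "s \<in> \<rat>" and e: "(Re t)\<^sup>2 + (Im t)\<^sup>2 - (r + s) * Re t + r * s = 0"
  shows "\<exists>a b c. Rel t a b c \<and> b \<noteq> 0 \<and> of_int (a\<^sup>2 + b * c) = (r - s)\<^sup>2 * (of_int b)\<^sup>2 / 4"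
proof -
  obtain m a b c where m: "m > 0" and R: "Rel t a b c" and b: "b = 2 * m"
    and a: "real_of_int a = - of_int m * (r + s)" and c: "real_of_int c = - 2 * of_int m * (r * s)"
    using clear_den[OF Rats_add[OF assms(1,2)] Rats_mult[OF assms(1,2)] e] by blast
  have "real_of_int (a\<^sup>2 + b * c) = (of_int a)\<^sup>2 + of_int b * of_int c" by simp
  also have "\<dots> = (r - s)\<^sup>2 * (of_int b)\<^sup>2 / 4" unfolding a c b by (simp add: power2_eq_square algebra_simps)
  finally show ?thesis using R b m by (intro exI[of _ a] exI[of _ b] exI[of _ c]) auto
qed

lemma G1:
  assumes "on_rational_geodesic t"
  shows "\<exists>a b c. Rel t a b c \<and> (a \<noteq> 0 \<or> b \<noteq> 0) \<and> sqrt (of_int (a\<^sup>2 + b * c)) \<in> \<rat>"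
proof -
  obtain p q where pq: "p \<in> P1Q" "q \<in> P1Q" "p \<noteq> q" "t \<in> geodesic p q"
    using assms unfolding on_rational_geodesic_def by blast
  show ?thesis
  proof (cases p)
    case (Fin r)
    note pr = Fin
    show ?thesis
    proof (cases q)
      case (Fin s)
      have rs: "r \<in> \<rat>" "s \<in> \<rat>" using pq pr Fin unfolding P1Q_def by auto
      have e: "(Re t)\<^sup>2 + (Im t)\<^sup>2 - (r + s) * Re t + r * s = 0" using pq pr Fin geo_ff by auto
      obtain a b c where R: "Rel t a b c" "b \<noteq> 0"
        and D: "real_of_int (a\<^sup>2 + b * c) = (r - s)\<^sup>2 * (of_int b)\<^sup>2 / 4"
        using circ_case[OF rs e] by blast
      have "real_of_int (a\<^sup>2 + b * c) = ((r - s) * of_int b / 2)\<^sup>2" using D by (simp add: power2_eq_square)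
      hence "sqrt (of_int (a\<^sup>2 + b * c)) = \<bar>(r - s) * of_int b / 2\<bar>" by simp
      moreover have "\<bar>(r - s) * of_int b / 2\<bar> \<in> \<rat>" using rs by (intro Rats_abs_iff[THEN iffD2]) simp
      ultimately show ?thesis using R by metis
    next
      case Infty
      have "Re t \<in> \<rat>" using pq pr Infty unfolding P1Q_def by auto
      then show ?thesis by (rule vert_case)
    qed
  next
    case Infty
    then obtain s where s: "q = Fin s" using pq by (cases q) auto
    have "Re t \<in> \<rat>" using pq s Infty unfolding P1Q_def by auto
    then show ?thesis by (rule vert_case)
  qed
qed

lemma G2:
  assumes "on_quadratic_geodesic t"
  shows "\<exists>a b c. Rel t a b c \<and> (a \<noteq> 0 \<or> b \<noteq> 0)"
proof -
  obtain x z where q: "conj_real_quad_irr x z" and g: "t \<in> geodesic (Fin x) (Fin z)"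
    using assms unfolding on_quadratic_geodesic_def by blast
  obtain r s where rs: "r \<in> \<rat>" "s \<in> \<rat>" "x\<^sup>2 + r * x + s = 0" "z\<^sup>2 + r * z + s = 0" and ne: "x \<noteq> z"
    using q unfolding conj_real_quad_irr_def by blast
  have "(x - z) * (x + z + r) = 0" using rs(3,4) by (simp add: algebra_simps power2_eq_square)
  hence sum: "x + z = - r" using ne by simp
  have rr: "r = - x - z" using sum by linarith
  have prod: "x * z = s" using rs(3) unfolding rr by (simp add: algebra_simps power2_eq_square)
  have e: "(Re t)\<^sup>2 + (Im t)\<^sup>2 - (- r) * Re t + s = 0" using g geo_ff sum prod by metis
  obtain m a b c where "m > 0" "Rel t a b c" "b = 2 * m"
    using clear_den[OF Rats_minus_iff[THEN iffD2, OF rs(1)] rs(2) e] by blast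
  then have "Rel t a b c \<and> (a \<noteq> 0 \<or> b \<noteq> 0)" by auto
  then show ?thesis by blast
qed

lemma root_lemma:
  fixes a b c k :: real
  assumes "b \<noteq> 0" "k\<^sup>2 = a\<^sup>2 + b * c"
  shows "((- a + k) / b)\<^sup>2 + (2 * a / b) * ((- a + k) / b) + (- c / b) = 0"
proof -
  have "b\<^sup>2 * (((- a + k) / b)\<^sup>2 + (2 * a / b) * ((- a + k) / b) + (- c / b)) = k\<^sup>2 - a\<^sup>2 - b * c"
    using assms(1) by (simp add: field_simps power2_eq_square)
  then show ?thesis using assms by simp
qed

lemma G34:
  assumes y: "Im t > 0" and R: "Rel t a b c" and nz: "a \<noteq> 0 \<or> b \<noteq> 0"
  shows "on_rational_geodesic t \<or> on_quadratic_geodesic t"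
    and "sqrt (of_int (a\<^sup>2 + b * c)) \<in> \<rat> \<Longrightarrow> on_rational_geodesic t"
proof -
  have hc: "real_of_int c = of_int b * ((Re t)\<^sup>2 + (Im t)\<^sup>2) + 2 * of_int a * Re t"
    using R unfolding Rel_def by simp
  define D where "D = real_of_int (a\<^sup>2 + b * c)"
  have D2: "D = (of_int b * Re t + of_int a)\<^sup>2 + (of_int b * Im t)\<^sup>2"
    unfolding D_def by (simp add: hc power2_eq_square algebra_simps)
  have Dpos: "D > 0"
  proof (cases "b = 0")
    case True then show ?thesis using nz unfolding D2 by simp
  next
    case False then show ?thesis using y unfolding D2
      by (simp add: add_nonneg_pos)
  qed
  define k where "k = sqrt D"
  have kpos: "k > 0" using Dpos unfolding k_def by simp
  have k2: "k\<^sup>2 = (of_int a)\<^sup>2 + of_int b * of_int c" using Dpos unfolding k_def D_def by simp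
  have main: "on_rational_geodesic t \<or> (b \<noteq> 0 \<and> k \<notin> \<rat> \<and> on_quadratic_geodesic t)"
  proof (cases "b = 0")
    case True
    then have a0: "a \<noteq> 0" using nz by simp
    have "Re t = of_int c / (2 * of_int a)" using hc True a0 by (simp add: field_simps)
    hence "Re t \<in> \<rat>" by simp
    hence "Fin (Re t) \<in> P1Q" unfolding P1Q_def by auto
    moreover have "t \<in> geodesic (Fin (Re t)) Infty" using y by simp
    moreover have "Infty \<in> P1Q" unfolding P1Q_def by simp
    ultimately have "on_rational_geodesic t" unfolding on_rational_geodesic_def by blast
    then show ?thesis by simp
  next
    case False
    define t1 where "t1 = (- of_int a + k) / of_int b"
    define t2 where "t2 = (- of_int a + (- k)) / of_int b"
    have ne: "t1 \<noteq> t2" using False kpos unfolding t1_def t2_def by (simp add: divide_simps)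
    have sum: "t1 + t2 = - 2 * of_int a / of_int b" unfolding t1_def t2_def by (simp add: add_divide_distrib[symmetric] diff_divide_distrib[symmetric])
    have prod: "t1 * t2 = - of_int c / of_int b" unfolding t1_def t2_def using False k2
      by (simp add: field_simps power2_eq_square)
    have "(Re t)\<^sup>2 + (Im t)\<^sup>2 - (t1 + t2) * Re t + t1 * t2 = 0"
      unfolding sum prod using False hc by (simp add: field_simps)
    hence g: "t \<in> geodesic (Fin t1) (Fin t2)" using geo_ff y by blast
    show ?thesis
    proof (cases "k \<in> \<rat>")
      case True
      have "t1 \<in> \<rat>" "t2 \<in> \<rat>" using True unfolding t1_def t2_def by simp_all
      hence "Fin t1 \<in> P1Q" "Fin t2 \<in> P1Q" unfolding P1Q_def by auto
      hence "on_rational_geodesic t" using g ne unfolding on_rational_geodesic_def by blast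
      then show ?thesis by simp
    next
      case kn: False
      have "t1 \<notin> \<rat>"
      proof
        assume "t1 \<in> \<rat>"
        hence "of_int b * t1 + of_int a \<in> \<rat>" by simp
        moreover have "of_int b * t1 + of_int a = k" unfolding t1_def using False by simp
        ultimately show False using kn by simp
      qed
      moreover have "t1\<^sup>2 + (2 * of_int a / of_int b) * t1 + (- of_int c / of_int b) = 0"
        unfolding t1_def by (rule root_lemma) (use False k2 in auto)
      moreover have "t2\<^sup>2 + (2 * of_int a / of_int b) * t2 + (- of_int c / of_int b) = 0"
        unfolding t2_def by (rule root_lemma) (use False k2 in auto)
      moreover have "2 * of_int a / of_int b \<in> \<rat>" "- of_int c / of_int b \<in> \<rat>" by simp_all
      ultimately have "conj_real_quad_irr t1 t2" unfolding conj_real_quad_irr_def using ne by blast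
      hence "on_quadratic_geodesic t" using g unfolding on_quadratic_geodesic_def by blast
      then show ?thesis using False kn by simp
    qed
  qed
  then show "on_rational_geodesic t \<or> on_quadratic_geodesic t" by blast
  show "sqrt (of_int (a\<^sup>2 + b * c)) \<in> \<rat> \<Longrightarrow> on_rational_geodesic t"
    using main unfolding k_def D_def by blast
qed

lemma cmod_alpha:
  assumes "Im t > 0" "Rel t a b c"
  shows "cmod (of_int a + of_int b * cnj t) = sqrt (of_int (a\<^sup>2 + b * c))"
  using alpha_props(1)[OF assms] by (metis norm_ge_zero real_sqrt_abs abs_of_nonneg)

theorem proposition3p1p1:
  fixes \<tau> :: complex
  assumes "Im \<tau> > 0"
  shows "(isogenous (lattice_gen \<tau>) (conj_lattice (lattice_gen \<tau>)) \<longleftrightarrow>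
           (on_rational_geodesic \<tau> \<or> on_quadratic_geodesic \<tau>)) \<and>
         ((\<exists>\<alpha> \<in> Isog (lattice_gen \<tau>) (conj_lattice (lattice_gen \<tau>)).
            \<alpha> \<noteq> 0 \<and> cmod \<alpha> \<in> \<rat>) \<longleftrightarrow> on_rational_geodesic \<tau>)"
proof -
  let ?I = "Isog (lattice_gen \<tau>) (conj_lattice (lattice_gen \<tau>))"
  have R0: "Rel \<tau> 0 0 0" unfolding Rel_def by simp
  have "0 \<in> ?I" using isog_char[OF assms, of 0] R0 by force
  hence iso: "isogenous (lattice_gen \<tau>) (conj_lattice (lattice_gen \<tau>)) \<longleftrightarrow> (\<exists>\<alpha>\<in>?I. \<alpha> \<noteq> 0)"
    unfolding isogenous_def by blast
  have P1: "(\<exists>\<alpha>\<in>?I. \<alpha> \<noteq> 0) \<longleftrightarrow> (\<exists>a b c. Rel \<tau> a b c \<and> (a \<noteq> 0 \<or> b \<noteq> 0))"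
  proof
    assume "\<exists>\<alpha>\<in>?I. \<alpha> \<noteq> 0"
    then obtain \<alpha> a b c where "\<alpha> \<noteq> 0" "\<alpha> = of_int a + of_int b * cnj \<tau>" "Rel \<tau> a b c"
      using isog_char[OF assms] by blast
    then show "\<exists>a b c. Rel \<tau> a b c \<and> (a \<noteq> 0 \<or> b \<noteq> 0)" using alpha_props(2)[OF assms] by blast
  next
    assume "\<exists>a b c. Rel \<tau> a b c \<and> (a \<noteq> 0 \<or> b \<noteq> 0)"
    then obtain a b c where "Rel \<tau> a b c" "a \<noteq> 0 \<or> b \<noteq> 0" by blast
    then show "\<exists>\<alpha>\<in>?I. \<alpha> \<noteq> 0" using alpha_props(2)[OF assms] isog_char[OF assms]
      by (metis (no_types, lifting))
  qed
  have P2: "(\<exists>\<alpha>\<in>?I. \<alpha> \<noteq> 0 \<and> cmod \<alpha> \<in> \<rat>) \<longleftrightarrow>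
      (\<exists>a b c. Rel \<tau> a b c \<and> (a \<noteq> 0 \<or> b \<noteq> 0) \<and> sqrt (of_int (a\<^sup>2 + b * c)) \<in> \<rat>)"
  proof
    assume "\<exists>\<alpha>\<in>?I. \<alpha> \<noteq> 0 \<and> cmod \<alpha> \<in> \<rat>"
    then obtain \<alpha> a b c where "\<alpha> \<noteq> 0" "cmod \<alpha> \<in> \<rat>" "\<alpha> = of_int a + of_int b * cnj \<tau>" "Rel \<tau> a b c"
      using isog_char[OF assms] by blast
    then show "\<exists>a b c. Rel \<tau> a b c \<and> (a \<noteq> 0 \<or> b \<noteq> 0) \<and> sqrt (of_int (a\<^sup>2 + b * c)) \<in> \<rat>"
      using alpha_props(2)[OF assms] cmod_alpha[OF assms] by metis
  next
    assume "\<exists>a b c. Rel \<tau> a b c \<and> (a \<noteq> 0 \<or> b \<noteq> 0) \<and> sqrt (of_int (a\<^sup>2 + b * c)) \<in> \<rat>"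
    then obtain a b c where R: "Rel \<tau> a b c" "a \<noteq> 0 \<or> b \<noteq> 0" "sqrt (of_int (a\<^sup>2 + b * c)) \<in> \<rat>" by blast
    have "of_int a + of_int b * cnj \<tau> \<in> ?I" using isog_char[OF assms] R(1) by blast
    moreover have "of_int a + of_int b * cnj \<tau> \<noteq> 0" using alpha_props(2)[OF assms R(1)] R(2) by blast
    moreover have "cmod (of_int a + of_int b * cnj \<tau>) \<in> \<rat>" using cmod_alpha[OF assms R(1)] R(3) by simp
    ultimately show "\<exists>\<alpha>\<in>?I. \<alpha> \<noteq> 0 \<and> cmod \<alpha> \<in> \<rat>" by blast
  qed
  have A: "isogenous (lattice_gen \<tau>) (conj_lattice (lattice_gen \<tau>)) \<longleftrightarrow>
           (on_rational_geodesic \<tau> \<or> on_quadratic_geodesic \<tau>)"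
    unfolding iso P1 using G34(1)[OF assms] G1 G2 by blast
  have B: "(\<exists>\<alpha>\<in>?I. \<alpha> \<noteq> 0 \<and> cmod \<alpha> \<in> \<rat>) \<longleftrightarrow> on_rational_geodesic \<tau>"
    unfolding P2 using G34(2)[OF assms] G1 by blast
  show ?thesis using A B by blast
qed

end
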